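(* Let $\Sigma=(X,\mathcal{S},\phi)$ be a forward complete dynamical system and let $t_1>0$, $G_0>0$ be such that $$\|\phi(t,x,\sigma)\|\le G_0\|x\|\quad\text{for all } t\in[0,t_1],\ x\in X,\ \sigma\in\mathcal{S}.$$ Then the following statements are equivalent: (i) $\Sigma$ is UGES; (ii) for every $p>0$ there exists $k>0$ such that $\int_0^{+\infty}\|\phi(t,x,\sigma)\|^p\,dt\le k^p\|x\|^p$ for all $x\in X$, $\sigma\in\mathcal{S}$; (iii) there exist $p,k>0$ such that $\int_0^{+\infty}\|\phi(t,x,\sigma)\|^p\,dt\le k^p\|x\|^p$ for all $x\in X$, $\sigma\in\mathcal{S}$.
   Context: $(X,\|\cdot\|)$ is a Banach space. Let $\mathcal{Q}$ be a nonempty set and $\mathcal{S}$ a set of functions $\sigma:\mathbb{R}_+\to\mathcal{Q}$ which is closed by time-shift (for $\sigma\in\mathcal{S}$, $\tau\ge0$, the function $\mathbb{T}_\tau\sigma:s\mapsto\sigma(\tau+s)$ is in $\mathcal{S}$) and closed by concatenation (for $\sigma_1,\sigma_2\in\mathcal{S}$, $\tau>0$, the function equal to $\sigma_1$ on $[0,\tau]$ and with $\sigma(\tau+t)=\sigma_2(t)$ for $t>0$ is in $\mathcal{S}$). A triple $\Sigma=(X,\mathcal{S},\phi)$ with $\phi:\mathbb{R}_+\times X\times\mathcal{S}\to X$ is a forward complete dynamical system if: (i) $\phi(0,x,\sigma)=x$; (ii) if $\tilde\sigma=\sigma$ on $[0,t]$ then $\phi(t,x,\tilde\sigma)=\phi(t,x,\sigma)$;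 (iii) $t\mapsto\phi(t,x,\sigma)$ is continuous; (iv) $\phi(\tau,\phi(t,x,\sigma),\mathbb{T}_t\sigma)=\phi(t+\tau,x,\sigma)$ for all $t,\tau\ge0$, $x\in X$, $\sigma\in\mathcal{S}$. $\Sigma$ is uniformly globally exponentially stable at the origin (UGES) if there exist $M,\lambda>0$ such that $\|\phi(t,x,\sigma)\|\le Me^{-\lambda t}\|x\|$ for all $t\ge0$, $x\in X$, $\sigma\in\mathcal{S}$. *)

theory Defs
  imports "HOL-Analysis.Analysis"
begin

text \<open>Switching signals are modelled as functions real => 'q; only their values on
  [0,inf) are relevant. Closure properties are stated up to agreement on [0,inf).\<close>

definition shift_closed :: "(real \<Rightarrow> 'q) set \<Rightarrow> bool" where
  "shift_closed S \<longleftrightarrow>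
     (\<forall>\<sigma>\<in>S. \<forall>\<tau>\<ge>0. (\<lambda>s. \<sigma> (\<tau> + s)) \<in> S)"

definition concat_closed :: "(real \<Rightarrow> 'q) set \<Rightarrow> bool" where
  "concat_closed S \<longleftrightarrow>
     (\<forall>\<sigma>1\<in>S. \<forall>\<sigma>2\<in>S. \<forall>\<tau>>0. \<exists>\<sigma>\<in>S.
        (\<forall>s\<in>{0..\<tau>}. \<sigma> s = \<sigma>1 s) \<and> (\<forall>t>0. \<sigma> (\<tau> + t) = \<sigma>2 t))"

definition fc_dynamical_system ::
  "(real \<Rightarrow> 'q) set \<Rightarrow> (real \<Rightarrow> 'x::banach \<Rightarrow> (real \<Rightarrow> 'q) \<Rightarrow> 'x) \<Rightarrow> bool" where
  "fc_dynamical_system S \<phi> \<longleftrightarrow>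
     shift_closed S \<and> concat_closed S \<and>
     (\<forall>x. \<forall>\<sigma>\<in>S. \<phi> 0 x \<sigma> = x) \<and>
     (\<forall>t\<ge>0. \<forall>x. \<forall>\<sigma>\<in>S. \<forall>\<sigma>'\<in>S. (\<forall>s\<in>{0..t}. \<sigma>' s = \<sigma> s) \<longrightarrow> \<phi> t x \<sigma>' = \<phi> t x \<sigma>) \<and>
     (\<forall>x. \<forall>\<sigma>\<in>S. continuous_on {0..} (\<lambda>t. \<phi> t x \<sigma>)) \<and>
     (\<forall>t\<ge>0. \<forall>\<tau>\<ge>0. \<forall>x. \<forall>\<sigma>\<in>S.
        \<phi> \<tau> (\<phi> t x \<sigma>) (\<lambda>s. \<sigma> (t + s)) = \<phi> (t + \<tau>) x \<sigma>)"

definition UGES ::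
  "(real \<Rightarrow> 'q) set \<Rightarrow> (real \<Rightarrow> 'x::banach \<Rightarrow> (real \<Rightarrow> 'q) \<Rightarrow> 'x) \<Rightarrow> bool" where
  "UGES S \<phi> \<longleftrightarrow> (\<exists>M>0. \<exists>lam>0. \<forall>t\<ge>0. \<forall>x. \<forall>\<sigma>\<in>S.
      norm (\<phi> t x \<sigma>) \<le> M * exp (- lam * t) * norm x)"

definition Lp_bounded ::
  "(real \<Rightarrow> 'q) set \<Rightarrow> (real \<Rightarrow> 'x::banach \<Rightarrow> (real \<Rightarrow> 'q) \<Rightarrow> 'x) \<Rightarrow> real \<Rightarrow> real \<Rightarrow> bool" where
  "Lp_bounded S \<phi> p k \<longleftrightarrow> (\<forall>x. \<forall>\<sigma>\<in>S.
      (\<integral>\<^sup>+ t\<in>{0..}. ennreal (norm (\<phi> t x \<sigma>) powr p) \<partial>lborel)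
        \<le> ennreal (k powr p * norm x powr p))"

end

theory Submission
  imports Defs
begin

lemma powr_cancel_le:
  fixes a b p :: real
  assumes "0 \<le> a" "0 \<le> b" "p > 0" "a powr p \<le> b powr p"
  shows "a \<le> b"
proof (rule ccontr)
  assume "\<not> a \<le> b"
  then have "b powr p < a powr p" using powr_less_mono2[of p b a] assms by auto
  then show False using assms by auto
qed

lemma nn_exp_int:
  fixes a :: real assumes "a > 0"
  shows "(\<integral>\<^sup>+ t\<in>{0..}. ennreal (exp (- a * t)) \<partial>lborel) = ennreal (1 / a)"
proof -
  have "integral\<^sup>N lborel (\<lambda>x. ennreal (indicator {0..} x * exp (- a * x))) = ennreal (exp (- a * 0) / a)"
    by (rule nn_integral_has_integral_lebesgue) (use has_integral_exp_minus_to_infinity[OF assms, of 0] in auto)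
  then show ?thesis by (simp add: mult.commute indicator_mult_ennreal)
qed

lemma half_pow_exp:
  fixes t T :: real and n :: nat
  assumes T: "T > 0" and n2: "t / T - 1 \<le> real n"
  shows "(1/2::real) ^ n \<le> 2 * exp (- (ln 2 / T) * t)"
proof -
  have "exp (real n * ln (1/2)) = exp (ln (1/2)) ^ n" by (rule exp_of_nat_mult)
  then have "(1/2::real) ^ n = exp (real n * ln (1/2))" by simp
  also have "ln (1/2::real) = - ln 2" by (simp add: ln_div)
  also have "exp (real n * - ln 2) \<le> exp (- (ln 2 * (t / T - 1)))"
    using n2 by (simp add: mult_left_mono)
  also have "- (ln 2 * (t / T - 1)) = ln 2 + (- (ln 2 / T) * t)" by (simp add: algebra_simps)
  also have "exp (ln 2 + (- (ln 2 / T) * t)) = 2 * exp (- (ln 2 / T) * t)" by (simp only: exp_add) simp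
  finally show ?thesis .
qed
lemma fl: fixes t T :: real assumes "t \<ge> 0" "T > 0" shows "real (nat \<lfloor>t / T\<rfloor>) \<le> t / T \<and> t / T - 1 \<le> real (nat \<lfloor>t / T\<rfloor>)"
proof -
  have "real (nat \<lfloor>t / T\<rfloor>) = of_int \<lfloor>t / T\<rfloor>" using assms by simp
  then show ?thesis using floor_correct[of "t/T"] by simp
qed

theorem theorem3:
  fixes S :: "(real \<Rightarrow> 'q) set"
    and \<phi> :: "real \<Rightarrow> 'x::banach \<Rightarrow> (real \<Rightarrow> 'q) \<Rightarrow> 'x"
    and t1 G0 :: real
  assumes "fc_dynamical_system S \<phi>"
    and "t1 > 0" and "G0 > 0"
    and "\<And>t x \<sigma>. t \<in> {0..t1} \<Longrightarrow> \<sigma> \<in> S \<Longrightarrow> norm (\<phi> t x \<sigma>) \<le> G0 * norm x"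
  shows "(UGES S \<phi> \<longleftrightarrow> (\<forall>p>0. \<exists>k>0. Lp_bounded S \<phi> p k))
       \<and> ((\<forall>p>0. \<exists>k>0. Lp_bounded S \<phi> p k) \<longleftrightarrow> (\<exists>p>0. \<exists>k>0. Lp_bounded S \<phi> p k))"
proof -
  have sh: "\<And>\<sigma> \<tau>. \<sigma> \<in> S \<Longrightarrow> \<tau> \<ge> 0 \<Longrightarrow> (\<lambda>s. \<sigma> (\<tau> + s)) \<in> S"
    using assms(1) unfolding fc_dynamical_system_def shift_closed_def by blast
  have semi: "\<And>t \<tau> x \<sigma>. t \<ge> 0 \<Longrightarrow> \<tau> \<ge> 0 \<Longrightarrow> \<sigma> \<in> S \<Longrightarrow>
      \<phi> \<tau> (\<phi> t x \<sigma>) (\<lambda>s. \<sigma> (t + s)) = \<phi> (t + \<tau>) x \<sigma>"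
    using assms(1) unfolding fc_dynamical_system_def by blast
  have i_ii: "\<exists>k>0. Lp_bounded S \<phi> p k" if U: "UGES S \<phi>" and p: "p > 0" for p
  proof -
    from U obtain M lam where M: "M > 0" "lam > 0"
      and B: "\<And>t x \<sigma>. t \<ge> 0 \<Longrightarrow> \<sigma> \<in> S \<Longrightarrow> norm (\<phi> t x \<sigma>) \<le> M * exp (- lam * t) * norm x"
      unfolding UGES_def by blast
    define k where "k = M * (1 / (lam * p)) powr (1 / p)"
    have kpos: "k > 0" using M p by (simp add: k_def)
    have kp: "k powr p = M powr p * (1 / (lam * p))"
      using M p by (simp add: k_def powr_mult powr_powr)
    show ?thesis
    proof (rule exI[of _ k], intro conjI kpos, unfold Lp_bounded_def, intro allI ballI)
      fix x and \<sigma> assume \<sigma>: "\<sigma> \<in> S"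
      have "(\<integral>\<^sup>+ t\<in>{0..}. ennreal (norm (\<phi> t x \<sigma>) powr p) \<partial>lborel)
          \<le> (\<integral>\<^sup>+ t\<in>{0..}. ennreal (M powr p * norm x powr p) * ennreal (exp (- (lam * p) * t)) \<partial>lborel)"
      proof (intro nn_integral_mono)
        fix t
        show "ennreal (norm (\<phi> t x \<sigma>) powr p) * indicator {0..} t
          \<le> ennreal (M powr p * norm x powr p) * ennreal (exp (- (lam * p) * t)) * indicator {0..} t"
        proof (cases "t \<ge> 0")
          case True
          have "norm (\<phi> t x \<sigma>) powr p \<le> (M * exp (- lam * t) * norm x) powr p"
            using B[OF True \<sigma>, of x] p by (intro powr_mono2) auto
          also have "\<dots> = M powr p * norm x powr p * exp (- (lam * p) * t)"
          proof -
            have e: "exp (- (lam * t)) powr p = exp (- (lam * p * t))" by (simp add: powr_def mult_ac)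
            show ?thesis using M by (simp add: powr_mult e)
          qed
          finally have "norm (\<phi> t x \<sigma>) powr p \<le> M powr p * norm x powr p * exp (- (lam * p) * t)" .
          then show ?thesis using True
            by (simp add: ennreal_mult'[symmetric] ennreal_leI)
        qed simp
      qed
      also have "\<dots> = ennreal (M powr p * norm x powr p) * (\<integral>\<^sup>+ t\<in>{0..}. ennreal (exp (- (lam * p) * t)) \<partial>lborel)"
        by (subst nn_integral_cmult[symmetric]) (auto simp: mult.assoc)
      also have "\<dots> = ennreal (M powr p * norm x powr p) * ennreal (1 / (lam * p))"
        using M p by (subst nn_exp_int) auto
      also have "\<dots> = ennreal (k powr p * norm x powr p)"
        using M p by (simp add: kp ennreal_mult'[symmetric] mult_ac)
      finally show "(\<integral>\<^sup>+ t\<in>{0..}. ennreal (norm (\<phi> t x \<sigma>) powr p) \<partial>lborel) \<le> ennreal (k powr p * norm x powr p)" .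
    qed
  qed
  have iii_i: "UGES S \<phi>" if p: "p > 0" and k: "k > 0" and Lp: "Lp_bounded S \<phi> p k" for p k
  proof -
    define A where "A = k powr p"
    have A0: "A \<ge> 0" by (simp add: A_def)
    have L: "(b - a) * c \<le> A * norm x powr p"
      if "0 \<le> a" "a \<le> b" "0 \<le> c" "\<sigma> \<in> S" "\<And>s. s \<in> {a..b} \<Longrightarrow> c \<le> norm (\<phi> s x \<sigma>) powr p"
      for a b c x \<sigma>
    proof -
      have "ennreal ((b - a) * c) = (\<integral>\<^sup>+ t. ennreal c * indicator {a..b} t \<partial>lborel)"
        using that by (simp add: nn_integral_cmult_indicator ennreal_mult' mult.commute)
      also have "\<dots> \<le> (\<integral>\<^sup>+ t. ennreal (norm (\<phi> t x \<sigma>) powr p) * indicator {0..} t \<partial>lborel)"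
        using that by (intro nn_integral_mono) (auto split: split_indicator intro: ennreal_leI)
      also have "\<dots> \<le> ennreal (A * norm x powr p)"
        using Lp that(4) unfolding Lp_bounded_def A_def by blast
      finally show ?thesis using A0 by (simp add: ennreal_le_iff)
    qed
    define C where "C = G0 * max 1 ((A / t1) powr (1 / p))"
    have C: "C > 0" "G0 \<le> C" using assms(3) by (auto simp: C_def)
    have step: "norm (\<phi> t x \<sigma>) \<le> B * norm (\<phi> s x \<sigma>)"
      if "0 \<le> s" "s \<le> t" "\<sigma> \<in> S" "\<And>r y \<sigma>'. 0 \<le> r \<Longrightarrow> r \<le> t - s \<Longrightarrow> \<sigma>' \<in> S \<Longrightarrow> norm (\<phi> r y \<sigma>') \<le> B * norm y"
      for s t x \<sigma> B
    proof -
      have "\<phi> t x \<sigma> = \<phi> (t - s) (\<phi> s x \<sigma>) (\<lambda>r. \<sigma> (s + r))"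
        using semi[of s "t - s" \<sigma> x] that by simp
      then show ?thesis using that(4)[of "t - s" "\<lambda>r. \<sigma> (s + r)" "\<phi> s x \<sigma>"] sh[OF that(3) that(1)] that by simp
    qed
    have U: "norm (\<phi> t x \<sigma>) \<le> C * norm x" if t: "t \<ge> 0" and \<sigma>: "\<sigma> \<in> S" for t x \<sigma>
    proof (cases "t \<le> t1")
      case True
      then have "norm (\<phi> t x \<sigma>) \<le> G0 * norm x" using assms(4) t \<sigma> by auto
      also have "\<dots> \<le> C * norm x" using C by (intro mult_right_mono) auto
      finally show ?thesis .
    next
      case False
      have "(norm (\<phi> t x \<sigma>) / G0) powr p \<le> norm (\<phi> s x \<sigma>) powr p" if s: "s \<in> {t - t1..t}" for s
      proof -
        have "norm (\<phi> t x \<sigma>) \<le> G0 * norm (\<phi> s x \<sigma>)"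
          using s False \<sigma> by (intro step) (auto intro!: assms(4))
        then have "norm (\<phi> t x \<sigma>) / G0 \<le> norm (\<phi> s x \<sigma>)" using assms(3) by (simp add: field_simps)
        then show ?thesis using p assms(3) by (intro powr_mono2) auto
      qed
      then have "(t - (t - t1)) * (norm (\<phi> t x \<sigma>) / G0) powr p \<le> A * norm x powr p"
        using False \<sigma> assms(2) by (intro L) auto
      then have "t1 * (norm (\<phi> t x \<sigma>) / G0) powr p \<le> A * norm x powr p" by simp
      then have "(norm (\<phi> t x \<sigma>) / G0) powr p \<le> A * norm x powr p / t1"
        using assms(2) by (simp add: pos_le_divide_eq mult.commute)
      also have "\<dots> = (A / t1) * norm x powr p" by simp
      also have "\<dots> = ((A / t1) powr (1 / p) * norm x) powr p"
      proof -
        have e1: "((A / t1) powr (1 / p)) powr p = A / t1"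
          using p A0 assms(2) by (simp add: powr_powr powr_one)
        have e2: "((A / t1) powr (1 / p) * norm x) powr p = ((A / t1) powr (1 / p)) powr p * norm x powr p"
          by (rule powr_mult)
        show ?thesis by (simp only: e2 e1)
      qed
      finally have fin: "(norm (\<phi> t x \<sigma>) / G0) powr p \<le> ((A / t1) powr (1 / p) * norm x) powr p" .
      have "norm (\<phi> t x \<sigma>) / G0 \<le> (A / t1) powr (1 / p) * norm x"
        by (rule powr_cancel_le[OF _ _ p fin]) (use assms(3) in auto)
      then have "norm (\<phi> t x \<sigma>) \<le> G0 * ((A / t1) powr (1 / p)) * norm x"
        using assms(3) by (simp add: field_simps)
      also have "\<dots> \<le> C * norm x" unfolding C_def using assms(3)
        by (intro mult_right_mono mult_left_mono) auto
      finally show ?thesis .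
    qed
    define Q where "Q = (2 * C) powr p"
    define T where "T = A * Q + 1"
    have Q: "Q > 0" using C by (simp add: Q_def)
    have AQ: "A * Q \<ge> 0" using A0 Q by simp
    have T: "T > 0" "A * Q \<le> T" using AQ by (auto simp: T_def)
    have H: "norm (\<phi> T x \<sigma>) \<le> norm x / 2" if \<sigma>: "\<sigma> \<in> S" for x \<sigma>
    proof -
      define y where "y = (norm (\<phi> T x \<sigma>) / C) powr p"
      define z where "z = norm x powr p"
      have "y \<le> norm (\<phi> s x \<sigma>) powr p" if s: "s \<in> {0..T}" for s
      proof -
        have "norm (\<phi> T x \<sigma>) \<le> C * norm (\<phi> s x \<sigma>)"
          using s \<sigma> by (intro step) (auto intro!: U)
        then have "norm (\<phi> T x \<sigma>) / C \<le> norm (\<phi> s x \<sigma>)" using C by (simp add: field_simps)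
        then show ?thesis unfolding y_def using p C by (intro powr_mono2) auto
      qed
      then have "(T - 0) * y \<le> A * z" unfolding z_def using T \<sigma> by (intro L) (auto simp: y_def)
      then have "Q * (T * y) \<le> Q * (A * z)" using Q by (intro mult_left_mono) auto
      also have "\<dots> = (A * Q) * z" by (simp add: mult_ac)
      also have "\<dots> \<le> T * z" using T unfolding z_def by (intro mult_right_mono) auto
      finally have "T * (Q * y) \<le> T * z" by (simp add: mult_ac)
      then have "Q * y \<le> z" using T by simp
      then have "y \<le> z / Q" using Q by (simp add: field_simps)
      also have "z / Q = (norm x / (2 * C)) powr p" unfolding z_def Q_def
        using C by (simp add: powr_divide)
      finally have fin: "(norm (\<phi> T x \<sigma>) / C) powr p \<le> (norm x / (2 * C)) powr p"
        unfolding y_def .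
      have "norm (\<phi> T x \<sigma>) / C \<le> norm x / (2 * C)"
        by (rule powr_cancel_le[OF _ _ p fin]) (use C in auto)
      then show ?thesis using C by (simp add: field_simps)
    qed
    have phi0: "\<phi> 0 x \<sigma> = x" if "\<sigma> \<in> S" for x \<sigma>
      using assms(1) that unfolding fc_dynamical_system_def by blast
    have D: "norm (\<phi> (real n * T) x \<sigma>) \<le> (1/2) ^ n * norm x" if \<sigma>: "\<sigma> \<in> S" for n x \<sigma>
    proof (induction n)
      case 0
      then show ?case using phi0[OF \<sigma>] by simp
    next
      case (Suc n)
      have e: "real (Suc n) * T = real n * T + T" by (simp add: algebra_simps)
      have nT0: "real n * T \<ge> 0" using T by simp
      have sh1: "(\<lambda>s. \<sigma> (real n * T + s)) \<in> S" by (rule sh[OF \<sigma> nT0])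
      have "\<phi> (real (Suc n) * T) x \<sigma> = \<phi> T (\<phi> (real n * T) x \<sigma>) (\<lambda>s. \<sigma> (real n * T + s))"
        unfolding e using semi[OF nT0 _ \<sigma>, of T x] T by simp
      also have "norm \<dots> \<le> norm (\<phi> (real n * T) x \<sigma>) / 2"
        by (rule H[OF sh1])
      also have "\<dots> \<le> (1/2) ^ Suc n * norm x" using Suc by simp
      finally show ?case .
    qed
    have main: "\<forall>t::real\<ge>0. \<forall>x. \<forall>\<sigma>\<in>S. norm (\<phi> t x \<sigma>) \<le> (2 * C) * exp (- (ln 2 / T) * t) * norm x"
    proof (intro allI impI ballI)
      fix t :: real and x \<sigma> assume t: "0 \<le> t" and \<sigma>: "\<sigma> \<in> S"
      define n where "n = nat \<lfloor>t / T\<rfloor>"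
      have rn: "real n = of_int \<lfloor>t / T\<rfloor>" using t T by (simp add: n_def)
      have n1: "real n \<le> t / T" and n2: "t / T - 1 \<le> real n"
        using floor_correct[of "t/T"] rn by simp_all
      have nT: "real n * T \<le> t" using n1 T by (simp add: pos_le_divide_eq)
      have nT0: "real n * T \<ge> 0" using T by simp
      have sh1: "(\<lambda>s. \<sigma> (real n * T + s)) \<in> S" by (rule sh[OF \<sigma> nT0])
      have h0: "t - real n * T \<ge> 0" using nT by simp
      have "\<phi> t x \<sigma> = \<phi> (t - real n * T) (\<phi> (real n * T) x \<sigma>) (\<lambda>s. \<sigma> (real n * T + s))"
        using semi[OF nT0 h0 \<sigma>, of x] by simp
      also have "norm \<dots> \<le> C * norm (\<phi> (real n * T) x \<sigma>)"
        by (rule U[OF h0 sh1])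
      finally have "norm (\<phi> t x \<sigma>) \<le> C * norm (\<phi> (real n * T) x \<sigma>)" .
      also have "\<dots> \<le> C * ((1/2) ^ n * norm x)" using D[OF \<sigma>] C by (intro mult_left_mono) auto
      also have "\<dots> \<le> C * (2 * exp (- (ln 2 / T) * t) * norm x)"
        using half_pow_exp[OF T(1) n2] C by (intro mult_left_mono mult_right_mono) auto
      finally show "norm (\<phi> t x \<sigma>) \<le> 2 * C * exp (- (ln 2 / T) * t) * norm x"
        by (simp add: mult_ac)
    qed
    have pos: "2 * C > 0" "ln 2 / T > 0" using C T by auto
    show ?thesis unfolding UGES_def using main pos by blast
  qed
  show ?thesis
  proof -
    have a: "(\<forall>p>0. \<exists>k>0. Lp_bounded S \<phi> p k) \<Longrightarrow> (\<exists>p>0. \<exists>k>0. Lp_bounded S \<phi> p k)"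
      by (meson zero_less_one)
    have b: "(\<exists>p>0. \<exists>k>0. Lp_bounded S \<phi> p k) \<Longrightarrow> UGES S \<phi>" using iii_i by blast
    show ?thesis using a b i_ii by blast
  qed
qed

end
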